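(* For integers $m,k\ge 0$, let $P_{m,k}=J([m]\times[k])$. Then, as formal power series, \[ \sum_{m=0}^\infty \sum_{k=0}^\infty \d(P_{m,k})\,x^m y^k = \frac{2xy}{(x^2 - 2xy + y^2 - 2x - 2y + 1)^2}. \]
   Context: For a finite poset $P$, $J(P)$ denotes the set of order ideals of $P$ ordered by inclusion (a distributive lattice); $[m]=\{1<2<\dots<m\}$ is a chain and $[m]\times[k]$ carries the componentwise order ($[0]$ is empty, so $J([0]\times[k])$ has one element). For a finite connected graph $G=(V,E)$ with graph distance $\d(p,q)$, the Wiener index is $\d(G)=\sum_{(p,q)\in V\times V}\d(p,q)$ (sum over ordered pairs). For a finite poset $P$, $\d(P)$ denotes the Wiener index of the Hasse diagram of $P$ (vertices are the elements of $P$, edges are the cover relations). *)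

theory Defs
  imports "HOL-Computational_Algebra.Formal_Power_Series"
begin

text \<open>A (simple, undirected) graph is given by a vertex set V and a symmetric
  adjacency predicate adj. A walk of length n from p to q is a list of n+1 vertices.\<close>

definition is_walk :: "'a set \<Rightarrow> ('a \<Rightarrow> 'a \<Rightarrow> bool) \<Rightarrow> 'a list \<Rightarrow> 'a \<Rightarrow> 'a \<Rightarrow> bool" where
  "is_walk V adj xs p q \<longleftrightarrow> xs \<noteq> [] \<and> set xs \<subseteq> V \<and> hd xs = p \<and> last xs = q \<and>
     (\<forall>i. Suc i < length xs \<longrightarrow> adj (xs ! i) (xs ! Suc i))"

text \<open>Graph distance: length of a shortest walk (the graphs considered are connected).\<close>
definition graph_dist :: "'a set \<Rightarrow> ('a \<Rightarrow> 'a \<Rightarrow> bool) \<Rightarrow> 'a \<Rightarrow> 'a \<Rightarrow> nat" where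
  "graph_dist V adj p q = (LEAST n. \<exists>xs. is_walk V adj xs p q \<and> length xs = Suc n)"

definition wiener :: "'a set \<Rightarrow> ('a \<Rightarrow> 'a \<Rightarrow> bool) \<Rightarrow> nat" where
  "wiener V adj = (\<Sum>(p, q) \<in> V \<times> V. graph_dist V adj p q)"

definition covers :: "'a set \<Rightarrow> ('a \<Rightarrow> 'a \<Rightarrow> bool) \<Rightarrow> 'a \<Rightarrow> 'a \<Rightarrow> bool" where
  "covers P le a b \<longleftrightarrow> a \<in> P \<and> b \<in> P \<and> le a b \<and> a \<noteq> b \<and>
     \<not> (\<exists>c\<in>P. le a c \<and> le c b \<and> c \<noteq> a \<and> c \<noteq> b)"

definition hasse_adj :: "'a set \<Rightarrow> ('a \<Rightarrow> 'a \<Rightarrow> bool) \<Rightarrow> 'a \<Rightarrow> 'a \<Rightarrow> bool" where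
  "hasse_adj P le a b \<longleftrightarrow> covers P le a b \<or> covers P le b a"

definition poset_wiener :: "'a set \<Rightarrow> ('a \<Rightarrow> 'a \<Rightarrow> bool) \<Rightarrow> nat" where
  "poset_wiener P le = wiener P (hasse_adj P le)"

definition order_ideals :: "'a set \<Rightarrow> ('a \<Rightarrow> 'a \<Rightarrow> bool) \<Rightarrow> 'a set set" where
  "order_ideals P le = {I. I \<subseteq> P \<and> (\<forall>x\<in>I. \<forall>y\<in>P. le y x \<longrightarrow> y \<in> I)}"

definition grid :: "nat \<Rightarrow> nat \<Rightarrow> (nat \<times> nat) set" where
  "grid m k = {1..m} \<times> {1..k}"

definition grid_le :: "nat \<times> nat \<Rightarrow> nat \<times> nat \<Rightarrow> bool" where
  "grid_le a b \<longleftrightarrow> fst a \<le> fst b \<and> snd a \<le> snd b"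

definition dP :: "nat \<Rightarrow> nat \<Rightarrow> nat" where
  "dP m k = poset_wiener (order_ideals (grid m k) grid_le) (\<subseteq>)"

text \<open>Bivariate series in x,y over the reals: series in y whose coefficients are series in x.\<close>
abbreviation fpsx :: "real fps fps" where "fpsx \<equiv> fps_const fps_X"
abbreviation fpsy :: "real fps fps" where "fpsy \<equiv> fps_X"

definition wiener_gf :: "real fps fps" where
  "wiener_gf = Abs_fps (\<lambda>k. Abs_fps (\<lambda>m. real (dP m k)))"

end

theory Submission
  imports Defs
begin
unbundle fps_syntax

definition gf :: "('a \<Rightarrow> nat) \<Rightarrow> ('a \<Rightarrow> nat) \<Rightarrow> 'a set \<Rightarrow> ('a \<Rightarrow> real) \<Rightarrow> real fps fps" where
  "gf cx cy S f = Abs_fps (\<lambda>k. Abs_fps (\<lambda>m. \<Sum>a \<in> {a \<in> S. cx a = m \<and> cy a = k}. f a))"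

definition finfib :: "('a \<Rightarrow> nat) \<Rightarrow> ('a \<Rightarrow> nat) \<Rightarrow> 'a set \<Rightarrow> bool" where
  "finfib cx cy S \<longleftrightarrow> (\<forall>m k. finite {a \<in> S. cx a = m \<and> cy a = k})"

lemma gf_nth: "gf cx cy S f $ k $ m = (\<Sum>a \<in> {a \<in> S. cx a = m \<and> cy a = k}. f a)"
  by (simp add: gf_def)

lemma gf_mult:
  assumes f1: "finfib cx1 cy1 S1" and f2: "finfib cx2 cy2 S2"
  shows "gf cx1 cy1 S1 f1 * gf cx2 cy2 S2 f2 =
    gf (\<lambda>(a,b). cx1 a + cx2 b) (\<lambda>(a,b). cy1 a + cy2 b) (S1 \<times> S2) (\<lambda>(a,b). f1 a * f2 b)"
proof (rule fps_ext, rule fps_ext)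
  fix k m
  define P where "P = {p \<in> S1 \<times> S2. (case p of (a,b) \<Rightarrow> cx1 a + cx2 b) = m \<and> (case p of (a,b) \<Rightarrow> cy1 a + cy2 b) = k}"
  define F1 where "F1 = (\<lambda>j i. {a \<in> S1. cx1 a = j \<and> cy1 a = i})"
  define F2 where "F2 = (\<lambda>j i. {a \<in> S2. cx2 a = j \<and> cy2 a = i})"
  have fin1: "finite (F1 j i)" for j i using f1 by (simp add: finfib_def F1_def)
  have fin2: "finite (F2 j i)" for j i using f2 by (simp add: finfib_def F2_def)
  have Pfin: "finite P"
  proof -
    have "P \<subseteq> (\<Union>j\<in>{0..m}. \<Union>i\<in>{0..k}. F1 j i \<times> F2 (m-j) (k-i))"
      by (auto simp: P_def F1_def F2_def)
    moreover have "finite (\<Union>j\<in>{0..m}. \<Union>i\<in>{0..k}. F1 j i \<times> F2 (m-j) (k-i))"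
      using fin1 fin2 by auto
    ultimately show ?thesis by (rule finite_subset)
  qed
  have "(gf cx1 cy1 S1 f1 * gf cx2 cy2 S2 f2) $ k $ m =
      (\<Sum>i=0..k. \<Sum>j=0..m. (\<Sum>a\<in>F1 j i. f1 a) * (\<Sum>b\<in>F2 (m-j) (k-i). f2 b))"
    by (simp add: fps_mult_nth fps_sum_nth gf_nth F1_def F2_def)
  also have "\<dots> = (\<Sum>i=0..k. \<Sum>j=0..m. \<Sum>p\<in>F1 j i \<times> F2 (m-j) (k-i). (\<lambda>(a,b). f1 a * f2 b) p)"
    by (simp add: sum_product sum.cartesian_product)
  also have "\<dots> = (\<Sum>i=0..k. \<Sum>j=0..m. \<Sum>p\<in>{p \<in> P. (cy1 (fst p), cx1 (fst p)) = (i,j)}. (\<lambda>(a,b). f1 a * f2 b) p)"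
  proof (rule sum.cong[OF refl], rule sum.cong[OF refl])
    fix i j assume i: "i \<in> {0..k}" and j: "j \<in> {0..m}"
    have "F1 j i \<times> F2 (m-j) (k-i) = {p \<in> P. (cy1 (fst p), cx1 (fst p)) = (i,j)}"
      using i j by (auto simp: P_def F1_def F2_def)
    then show "(\<Sum>p\<in>F1 j i \<times> F2 (m-j) (k-i). (\<lambda>(a,b). f1 a * f2 b) p) =
       (\<Sum>p\<in>{p \<in> P. (cy1 (fst p), cx1 (fst p)) = (i,j)}. (\<lambda>(a,b). f1 a * f2 b) p)" by simp
  qed
  also have "\<dots> = (\<Sum>y\<in>{0..k}\<times>{0..m}. \<Sum>p\<in>{p \<in> P. (cy1 (fst p), cx1 (fst p)) = y}. (\<lambda>(a,b). f1 a * f2 b) p)"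
    by (simp only: sum.cartesian_product) (auto intro!: sum.cong)
  also have "\<dots> = (\<Sum>p\<in>P. (\<lambda>(a,b). f1 a * f2 b) p)"
    by (rule sum.group[OF Pfin]) (auto simp: P_def)
  also have "\<dots> = gf (\<lambda>(a,b). cx1 a + cx2 b) (\<lambda>(a,b). cy1 a + cy2 b) (S1 \<times> S2) (\<lambda>(a,b). f1 a * f2 b) $ k $ m"
    by (simp add: gf_nth P_def)
  finally show "(gf cx1 cy1 S1 f1 * gf cx2 cy2 S2 f2) $ k $ m =
    gf (\<lambda>(a,b). cx1 a + cx2 b) (\<lambda>(a,b). cy1 a + cy2 b) (S1 \<times> S2) (\<lambda>(a,b). f1 a * f2 b) $ k $ m" .
qed

lemma gf_cong:
  assumes "\<And>a. a \<in> S \<Longrightarrow> cx a = cx' a \<and> cy a = cy' a \<and> f a = f' a"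
  shows "gf cx cy S f = gf cx' cy' S f'"
proof -
  have "{a \<in> S. cx a = m \<and> cy a = k} = {a \<in> S. cx' a = m \<and> cy' a = k}" for m k
    using assms by auto
  then show ?thesis unfolding gf_def using assms
    by (intro arg_cong[where f=Abs_fps] ext arg_cong[where f=Abs_fps]) (auto intro!: sum.cong)
qed

lemma gf_reindex:
  assumes "bij_betw h A B"
  shows "gf cx cy B f = gf (cx \<circ> h) (cy \<circ> h) A (f \<circ> h)"
proof (rule fps_ext, rule fps_ext)
  fix k m
  have inj: "inj_on h A" using assms by (simp add: bij_betw_def)
  have img: "h ` {a \<in> A. cx (h a) = m \<and> cy (h a) = k} = {b \<in> B. cx b = m \<and> cy b = k}"
    using assms by (auto simp: bij_betw_def)
  have "gf cx cy B f $ k $ m = (\<Sum>b \<in> h ` {a \<in> A. cx (h a) = m \<and> cy (h a) = k}. f b)"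
    by (simp add: gf_nth img)
  also have "\<dots> = (\<Sum>a \<in> {a \<in> A. cx (h a) = m \<and> cy (h a) = k}. f (h a))"
    by (rule sum.reindex_cong[OF _ refl refl]) (rule inj_on_subset[OF inj], auto)
  finally show "gf cx cy B f $ k $ m = gf (cx \<circ> h) (cy \<circ> h) A (f \<circ> h) $ k $ m"
    by (simp add: gf_nth)
qed

lemma gf_union:
  assumes "finfib cx cy A" "finfib cx cy B" "A \<inter> B = {}"
  shows "gf cx cy (A \<union> B) f = gf cx cy A f + gf cx cy B f"
proof (rule fps_ext, rule fps_ext)
  fix k m
  have "{a \<in> A \<union> B. cx a = m \<and> cy a = k} = {a \<in> A. cx a = m \<and> cy a = k} \<union> {a \<in> B. cx a = m \<and> cy a = k}"
    by auto
  moreover have "finite {a \<in> A. cx a = m \<and> cy a = k}" "finite {a \<in> B. cx a = m \<and> cy a = k}"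
    using assms by (auto simp: finfib_def)
  ultimately show "gf cx cy (A \<union> B) f $ k $ m = (gf cx cy A f + gf cx cy B f) $ k $ m"
    using assms(3) by (simp add: gf_nth sum.union_disjoint disjoint_iff)
qed

lemma gf_add: "gf cx cy S (\<lambda>a. f a + g a) = gf cx cy S f + gf cx cy S g"
  by (rule fps_ext, rule fps_ext) (simp add: gf_nth sum.distrib)

lemma gf_shiftx: "fpsx * gf cx cy S f = gf (\<lambda>a. Suc (cx a)) cy S f"
proof (rule fps_ext, rule fps_ext)
  fix k m
  show "(fpsx * gf cx cy S f) $ k $ m = gf (\<lambda>a. Suc (cx a)) cy S f $ k $ m"
    by (cases m) (simp_all add: fps_mult_left_const_nth gf_nth fps_X_mult_nth)
qed

lemma gf_shifty: "fpsy * gf cx cy S f = gf cx (\<lambda>a. Suc (cy a)) S f"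
proof (rule fps_ext, rule fps_ext)
  fix k m
  show "(fpsy * gf cx cy S f) $ k $ m = gf cx (\<lambda>a. Suc (cy a)) S f $ k $ m"
    by (cases k) (simp_all add: gf_nth fps_X_mult_nth)
qed

lemma gf_single: "cx a = 0 \<Longrightarrow> cy a = 0 \<Longrightarrow> gf cx cy {a} (\<lambda>_. 1) = 1"
proof (rule fps_ext, rule fps_ext)
  fix k m assume "cx a = 0" "cy a = 0"
  then have "{aa \<in> {a}. cx aa = m \<and> cy aa = k} = (if m = 0 \<and> k = 0 then {a} else {})" by auto
  then show "gf cx cy {a} (\<lambda>_. 1) $ k $ m = (1::real fps fps) $ k $ m"
    by (simp add: gf_nth)
qed


type_synonym lt = "bool \<times> bool"

definition stp :: "lt \<Rightarrow> int" where
  "stp c = (if fst c \<and> \<not> snd c then 1 else if \<not> fst c \<and> snd c then -1 else 0)"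

primrec hgt :: "lt list \<Rightarrow> int" where
  "hgt [] = 0"
| "hgt (c # w) = stp c + hgt w"

primrec nn :: "int \<Rightarrow> lt list \<Rightarrow> bool" where
  "nn h [] = True"
| "nn h (c # w) = (0 \<le> h + stp c \<and> nn (h + stp c) w)"

primrec cst :: "int \<Rightarrow> lt list \<Rightarrow> int" where
  "cst h [] = 0"
| "cst h (c # w) = \<bar>h\<bar> + cst (h + stp c) w"

definition cxw :: "lt list \<Rightarrow> nat" where "cxw w = length (filter fst w)"
definition cyw :: "lt list \<Rightarrow> nat" where "cyw w = length (filter (\<lambda>c. \<not> fst c) w)"

definition sw :: "lt \<Rightarrow> lt" where "sw c = (snd c, fst c)"

abbreviation "la \<equiv> (True, True)"
abbreviation "lb \<equiv> (False, False)"
abbreviation "lu \<equiv> (True, False)"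
abbreviation "lv \<equiv> (False, True)"

definition Motz :: "lt list set" where "Motz = {w. nn 0 w \<and> hgt w = 0}"
definition Br :: "lt list set" where "Br = {w. hgt w = 0}"

lemma stp_simps [simp]: "stp la = 0" "stp lb = 0" "stp lu = 1" "stp lv = -1"
  by (simp_all add: stp_def)

lemma letter_cases: "c = la \<or> c = lb \<or> c = lu \<or> c = lv"
  by (cases c) auto

lemma hgt_append [simp]: "hgt (w1 @ w2) = hgt w1 + hgt w2"
  by (induction w1) auto

lemma nn_append [simp]: "nn h (w1 @ w2) = (nn h w1 \<and> nn (h + hgt w1) w2)"
  by (induction w1 arbitrary: h) (auto simp: add.assoc)

lemma cst_append [simp]: "cst h (w1 @ w2) = cst h w1 + cst (h + hgt w1) w2"
  by (induction w1 arbitrary: h) (auto simp: add.assoc)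

lemma nn_final: "nn h w \<Longrightarrow> 0 \<le> h \<Longrightarrow> 0 \<le> h + hgt w"
proof (induction w arbitrary: h)
  case (Cons c w)
  then show ?case using Cons.IH[of "h + stp c"] by (simp add: add.assoc)
qed simp

lemma nn_mono: "nn h w \<Longrightarrow> h \<le> h' \<Longrightarrow> nn h' w"
proof (induction w arbitrary: h h')
  case (Cons c w)
  then have "0 \<le> h' + stp c" "h + stp c \<le> h' + stp c" "nn (h + stp c) w" by auto
  with Cons.IH show ?case by auto
qed simp

lemma nn_split:
  assumes "\<not> nn h w" "0 \<le> h"
  shows "\<exists>w1 w2. w = w1 @ lv # w2 \<and> nn h w1 \<and> h + hgt w1 = 0"
  using assms
proof (induction w arbitrary: h)
  case Nil then show ?case by simp
next
  case (Cons c w)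
  show ?case
  proof (cases "0 \<le> h + stp c")
    case True
    with Cons have "\<not> nn (h + stp c) w" by simp
    from Cons.IH[OF this True] obtain w1 w2 where
      "w = w1 @ lv # w2" "nn (h + stp c) w1" "h + stp c + hgt w1 = 0" by blast
    then show ?thesis using True
      by (intro exI[of _ "c # w1"] exI[of _ w2]) (auto simp: add.assoc)
  next
    case False
    then have "c = lv" "h = 0" using Cons.prems letter_cases[of c] by auto
    then show ?thesis by (intro exI[of _ "[]"] exI[of _ w]) auto
  qed
qed

lemma first_return_unique:
  assumes "w1 @ lv # w2 = w1' @ lv # w2'" "nn 0 w1" "hgt w1 = 0" "nn 0 w1'" "hgt w1' = 0"
  shows "w1 = w1' \<and> w2 = w2'"
proof -
  have helper: False if "w1 = w1' @ us" "us @ lv # w2 = lv # w2'" "us \<noteq> []"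
    "nn 0 w1" "hgt w1' = 0" for w1 w1' w2 w2' us
  proof -
    from that(2,3) obtain us' where "us = lv # us'" by (cases us) auto
    with that show False by simp
  qed
  from assms(1) obtain us where us: "(w1 = w1' @ us \<and> us @ lv # w2 = lv # w2') \<or>
      (w1 @ us = w1' \<and> lv # w2 = us @ lv # w2')"
    unfolding append_eq_append_conv2 by blast
  then show ?thesis
  proof
    assume h: "w1 = w1' @ us \<and> us @ lv # w2 = lv # w2'"
    show ?thesis
    proof (cases "us = []")
      case True with h show ?thesis by simp
    next
      case False with h assms have False using helper by blast
      then show ?thesis ..
    qed
  next
    assume h: "w1 @ us = w1' \<and> lv # w2 = us @ lv # w2'"
    show ?thesis
    proof (cases "us = []")
      case True with h show ?thesis by simp
    next
      case False
      have "w1' = w1 @ us" "us @ lv # w2' = lv # w2" using h by auto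
      with False assms have False using helper by blast
      then show ?thesis ..
    qed
  qed
qed

lemma cxw_simps [simp]: "cxw [] = 0" "cxw (c # w) = (if fst c then Suc (cxw w) else cxw w)"
  "cxw (w1 @ w2) = cxw w1 + cxw w2"
  by (simp_all add: cxw_def)

lemma cyw_simps [simp]: "cyw [] = 0" "cyw (c # w) = (if fst c then cyw w else Suc (cyw w))"
  "cyw (w1 @ w2) = cyw w1 + cyw w2"
  by (simp_all add: cyw_def)

lemma len_cxw_cyw: "length w = cxw w + cyw w"
  by (induction w) auto

lemma finfib_words: "finfib cxw cyw (S :: lt list set)"
  unfolding finfib_def
proof (intro allI)
  fix m k
  have "{a \<in> S. cxw a = m \<and> cyw a = k} \<subseteq> {w. set w \<subseteq> UNIV \<and> length w = m + k}"
    using len_cxw_cyw by auto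
  moreover have "finite {w :: lt list. set w \<subseteq> UNIV \<and> length w = m + k}"
    by (rule finite_lists_length_eq) simp
  ultimately show "finite {a \<in> S. cxw a = m \<and> cyw a = k}" by (rule finite_subset)
qed

lemma sw_sw [simp]: "sw (sw c) = c" by (simp add: sw_def)
lemma map_sw_sw [simp]: "map sw (map sw w) = w" by (induction w) auto
lemma stp_sw [simp]: "stp (sw c) = - stp c" by (simp add: sw_def stp_def)
lemma hgt_sw [simp]: "hgt (map sw w) = - hgt w" by (induction w) auto
lemma cst_sw: "cst h (map sw w) = cst (- h) w"
  by (induction w arbitrary: h) auto
lemma sw_simps [simp]: "sw lu = lv" "sw lv = lu" by (simp_all add: sw_def)

lemma cnt_hgt: "int (length (filter fst w)) - int (length (filter snd w)) = hgt w"
  by (induction w) (auto simp: stp_def)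

lemma cxw_sw: "hgt w = 0 \<Longrightarrow> cxw (map sw w) = cxw w"
  using cnt_hgt[of w] by (simp add: cxw_def sw_def comp_def)

lemma cyw_sw: "hgt w = 0 \<Longrightarrow> cyw (map sw w) = cyw w"
proof -
  assume h: "hgt w = 0"
  have "cyw (map sw w) = length w - cxw (map sw w)" using len_cxw_cyw[of "map sw w"] by simp
  also have "\<dots> = length w - cxw w" using cxw_sw[OF h] by simp
  also have "\<dots> = cyw w" using len_cxw_cyw[of w] by simp
  finally show ?thesis .
qed

lemma cst_shift:
  assumes "nn g w" "0 \<le> g" "0 \<le> d"
  shows "cst (g + d) w = d * int (length w) + cst g w"
  using assms
proof (induction w arbitrary: g)
  case Nil then show ?case by simp
next
  case (Cons c w)
  have "0 \<le> g + stp c" "nn (g + stp c) w" using Cons.prems by auto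
  from Cons.IH[OF this(2,1) Cons.prems(3)] have "cst (g + stp c + d) w = d * int (length w) + cst (g + stp c) w" .
  then show ?case using Cons.prems by (simp add: algebra_simps)
qed


definition hu :: "lt list \<times> lt list \<Rightarrow> lt list" where
  "hu p = lu # fst p @ lv # snd p"
definition hv :: "lt list \<times> lt list \<Rightarrow> lt list" where
  "hv p = lv # map sw (fst p) @ lu # snd p"

lemma Motz_cons_u:
  assumes "lu # w \<in> Motz"
  shows "\<exists>w1 w2. w = w1 @ lv # w2 \<and> w1 \<in> Motz \<and> w2 \<in> Motz"
proof -
  from assms have n1: "nn 1 w" and h: "hgt w = -1" by (auto simp: Motz_def)
  have "\<not> nn 0 w" using nn_final[of 0 w] h by auto
  from nn_split[OF this] obtain w1 w2 where w: "w = w1 @ lv # w2" "nn 0 w1" "hgt w1 = 0" by auto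
  with n1 h have "nn 0 w2" "hgt w2 = 0" by auto
  with w show ?thesis by (auto simp: Motz_def)
qed

lemma Br_cons_u:
  assumes "lu # w \<in> Br"
  shows "\<exists>w1 w2. w = w1 @ lv # w2 \<and> w1 \<in> Motz \<and> w2 \<in> Br"
proof -
  from assms have h: "hgt w = -1" by (auto simp: Br_def)
  have "\<not> nn 0 w" using nn_final[of 0 w] h by auto
  from nn_split[OF this] obtain w1 w2 where w: "w = w1 @ lv # w2" "nn 0 w1" "hgt w1 = 0" by auto
  with h have "hgt w2 = 0" by auto
  with w show ?thesis by (auto simp: Motz_def Br_def)
qed

lemma Br_cons_v:
  assumes "lv # w \<in> Br"
  shows "\<exists>w1 w2. w = map sw w1 @ lu # w2 \<and> w1 \<in> Motz \<and> w2 \<in> Br"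
proof -
  from assms have "lu # map sw w \<in> Br" by (auto simp: Br_def)
  from Br_cons_u[OF this] obtain w1 w2 where w: "map sw w = w1 @ lv # w2" "w1 \<in> Motz" "w2 \<in> Br"
    by auto
  then have "w = map sw w1 @ lu # map sw w2" by (metis list.simps(9) map_append map_sw_sw sw_simps(2))
  moreover have "map sw w2 \<in> Br" using w(3) by (simp add: Br_def)
  ultimately show ?thesis using w(2) by blast
qed

lemma Motz_decomp:
  "Motz = {[]} \<union> ((#) la ` Motz) \<union> ((#) lb ` Motz) \<union> (hu ` (Motz \<times> Motz))"
proof (intro equalityI subsetI)
  fix w assume w: "w \<in> Motz"
  show "w \<in> {[]} \<union> ((#) la ` Motz) \<union> ((#) lb ` Motz) \<union> (hu ` (Motz \<times> Motz))"
  proof (cases w)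
    case Nil then show ?thesis by simp
  next
    case (Cons c w')
    consider "c = la" | "c = lb" | "c = lu" | "c = lv" using letter_cases by blast
    then show ?thesis
    proof cases
      case 1 then show ?thesis using w Cons by (auto simp: Motz_def)
    next
      case 2 then show ?thesis using w Cons by (auto simp: Motz_def)
    next
      case 3
      from Motz_cons_u[of w'] w Cons 3 obtain w1 w2 where
        "w' = w1 @ lv # w2" "w1 \<in> Motz" "w2 \<in> Motz" by auto
      then show ?thesis using Cons 3 by (auto simp: hu_def image_iff)
    next
      case 4 then show ?thesis using w Cons by (auto simp: Motz_def)
    qed
  qed
next
  fix w assume "w \<in> {[]} \<union> ((#) la ` Motz) \<union> ((#) lb ` Motz) \<union> (hu ` (Motz \<times> Motz))"
  then show "w \<in> Motz"
    using nn_mono[of 0 _ 1] by (auto simp: Motz_def hu_def)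
qed

lemma Br_decomp:
  "Br = {[]} \<union> ((#) la ` Br) \<union> ((#) lb ` Br) \<union> (hu ` (Motz \<times> Br)) \<union> (hv ` (Motz \<times> Br))"
proof (intro equalityI subsetI)
  fix w assume w: "w \<in> Br"
  show "w \<in> {[]} \<union> ((#) la ` Br) \<union> ((#) lb ` Br) \<union> (hu ` (Motz \<times> Br)) \<union> (hv ` (Motz \<times> Br))"
  proof (cases w)
    case Nil then show ?thesis by simp
  next
    case (Cons c w')
    consider "c = la" | "c = lb" | "c = lu" | "c = lv" using letter_cases by blast
    then show ?thesis
    proof cases
      case 1 then show ?thesis using w Cons by (auto simp: Br_def)
    next
      case 2 then show ?thesis using w Cons by (auto simp: Br_def)
    next
      case 3
      from Br_cons_u[of w'] w Cons 3 obtain w1 w2 where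
        "w' = w1 @ lv # w2" "w1 \<in> Motz" "w2 \<in> Br" by auto
      then show ?thesis using Cons 3 by (auto simp: hu_def image_iff)
    next
      case 4
      from Br_cons_v[of w'] w Cons 4 obtain w1 w2 where
        "w' = map sw w1 @ lu # w2" "w1 \<in> Motz" "w2 \<in> Br" by auto
      then show ?thesis using Cons 4 by (auto simp: hv_def image_iff)
    qed
  qed
next
  fix w assume "w \<in> {[]} \<union> ((#) la ` Br) \<union> ((#) lb ` Br) \<union> (hu ` (Motz \<times> Br)) \<union> (hv ` (Motz \<times> Br))"
  then show "w \<in> Br"
    by (auto simp: Motz_def Br_def hu_def hv_def)
qed

lemma inj_hu: "inj_on hu (Motz \<times> X)"
proof (rule inj_onI)
  fix p q assume "p \<in> Motz \<times> X" "q \<in> Motz \<times> X" "hu p = hu q"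
  then have "fst p @ lv # snd p = fst q @ lv # snd q" "fst p \<in> Motz" "fst q \<in> Motz"
    by (auto simp: hu_def)
  from first_return_unique[OF this(1)] this(2,3) show "p = q"
    by (auto simp: Motz_def prod_eq_iff)
qed

lemma sw_comp [simp]: "sw \<circ> sw = id" by (simp add: fun_eq_iff)

lemma inj_hv: "inj_on hv (Motz \<times> X)"
proof (rule inj_onI)
  fix p q assume "p \<in> Motz \<times> X" "q \<in> Motz \<times> X" "hv p = hv q"
  then have "map sw (map sw (fst p) @ lu # snd p) = map sw (map sw (fst q) @ lu # snd q)"
    "fst p \<in> Motz" "fst q \<in> Motz"
    by (auto simp: hv_def)
  then have "fst p @ lv # map sw (snd p) = fst q @ lv # map sw (snd q)" "fst p \<in> Motz" "fst q \<in> Motz"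
    by auto
  from first_return_unique[OF this(1)] this(2,3) have "fst p = fst q" "map sw (snd p) = map sw (snd q)"
    by (auto simp: Motz_def)
  then show "p = q" by (metis map_sw_sw prod_eq_iff)
qed


lemma key_alg:
  fixes x y E G L A T :: "'a::comm_ring_1"
  assumes e: "E = 1 + (x+y)*E + x*y*(E*E)"
    and g: "G = 1 + (x+y)*G + x*y*(E*G) + x*y*(E*G)"
    and l: "L = (x+y)*(E+L) + x*y*((L + 2*E)*E + E*L)"
    and a: "A = (x+y)*A + x*y*((L+A+E)*E + E*A)"
    and t: "T = (x+y)*T + x*y*((L+A+E)*G + E*T) + x*y*((L+A+E)*G + E*T)"
  shows "T * (x^2 - 2*x*y + y^2 - 2*x - 2*y + 1)^2 = 2*x*y"
proof -
  define p where "p = x*y"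
  define K where "K = 1 - (x+y) - 2*p*E"
  have KG: "K*G = 1" using g unfolding K_def p_def by (simp add: algebra_simps)
  have KLE: "K*(L+E) = E" using l unfolding K_def p_def by (simp add: algebra_simps)
  have EK: "E*(K + p*E) = 1" using e unfolding K_def p_def by (simp add: algebra_simps)
  have KA: "K*A = p*E*(L+E)" using a unfolding K_def p_def by (simp add: algebra_simps)
  have KT: "K*T = 2*p*G*(L+E+A)" using t unfolding K_def p_def by (simp add: algebra_simps)
  have KK: "K*K = x^2 - 2*x*y + y^2 - 2*x - 2*y + 1"
  proof -
    have "K*K = (1-(x+y))^2 - 4*p*(E*(1-(x+y)) - p*E*E)"
      unfolding K_def by (simp add: algebra_simps power2_eq_square)
    also have "E*(1-(x+y)) - p*E*E = 1" using EK unfolding K_def by (simp add: algebra_simps)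
    finally show ?thesis unfolding p_def by (simp add: algebra_simps power2_eq_square)
  qed
  have S: "K*K*(L+E+A) = 1"
  proof -
    have "K*K*(L+E+A) = K*(K*(L+E)) + K*(K*A)" by (simp add: algebra_simps)
    also have "\<dots> = K*E + K*(p*E*(L+E))" using KLE KA by simp
    also have "\<dots> = K*E + p*E*(K*(L+E))" by (simp add: algebra_simps)
    also have "\<dots> = K*E + p*E*E" using KLE by simp
    also have "\<dots> = E*(K + p*E)" by (simp add: algebra_simps)
    finally show ?thesis using EK by simp
  qed
  have "T * (K*K)^2 = 2*p*(K*G)*(K*K*(L+E+A))"
  proof -
    have "T * (K*K)^2 = K*K*K*(K*T)" by (simp add: algebra_simps power2_eq_square)
    also have "\<dots> = 2*p*(K*G)*(K*K*(L+E+A))" using KT by (simp add: algebra_simps)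
    finally show ?thesis .
  qed
  then show ?thesis using KG S KK unfolding p_def by simp
qed


lemma gf_single0: "f a = 0 \<Longrightarrow> gf cx cy {a} f = 0"
  by (rule fps_ext, rule fps_ext) (auto simp: gf_nth)

lemma gf_cons_x:
  assumes "fst c"
  shows "gf cxw cyw ((#) c ` S) f = fpsx * gf cxw cyw S (\<lambda>w. f (c # w))"
proof -
  have "bij_betw ((#) c) S ((#) c ` S)" by (rule inj_on_imp_bij_betw) (simp add: inj_on_def)
  then have "gf cxw cyw ((#) c ` S) f = gf (cxw \<circ> (#) c) (cyw \<circ> (#) c) S (f \<circ> (#) c)"
    by (rule gf_reindex)
  also have "\<dots> = gf (\<lambda>w. Suc (cxw w)) cyw S (\<lambda>w. f (c # w))"
    using assms by (intro gf_cong) auto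
  also have "\<dots> = fpsx * gf cxw cyw S (\<lambda>w. f (c # w))" by (rule gf_shiftx[symmetric])
  finally show ?thesis .
qed

lemma gf_cons_y:
  assumes "\<not> fst c"
  shows "gf cxw cyw ((#) c ` S) f = fpsy * gf cxw cyw S (\<lambda>w. f (c # w))"
proof -
  have "bij_betw ((#) c) S ((#) c ` S)" by (rule inj_on_imp_bij_betw) (simp add: inj_on_def)
  then have "gf cxw cyw ((#) c ` S) f = gf (cxw \<circ> (#) c) (cyw \<circ> (#) c) S (f \<circ> (#) c)"
    by (rule gf_reindex)
  also have "\<dots> = gf cxw (\<lambda>w. Suc (cyw w)) S (\<lambda>w. f (c # w))"
    using assms by (intro gf_cong) auto
  also have "\<dots> = fpsy * gf cxw cyw S (\<lambda>w. f (c # w))" by (rule gf_shifty[symmetric])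
  finally show ?thesis .
qed

lemma gf_pair:
  assumes bij: "bij_betw h (A \<times> B) C"
    and hc: "\<And>a b. a \<in> A \<Longrightarrow> b \<in> B \<Longrightarrow> cxw (h (a,b)) = Suc (cxw a + cxw b) \<and>
        cyw (h (a,b)) = Suc (cyw a + cyw b) \<and> f (h (a,b)) = g1 a * g2 b + g3 a * g4 b"
  shows "gf cxw cyw C f = fpsx * fpsy * (gf cxw cyw A g1 * gf cxw cyw B g2 + gf cxw cyw A g3 * gf cxw cyw B g4)"
proof -
  let ?cx = "\<lambda>(a,b). cxw a + cxw b" and ?cy = "\<lambda>(a,b). cyw a + cyw b"
  have "gf cxw cyw C f = gf (cxw \<circ> h) (cyw \<circ> h) (A \<times> B) (f \<circ> h)"
    using bij by (rule gf_reindex)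
  also have "\<dots> = gf (\<lambda>p. Suc (?cx p)) (\<lambda>p. Suc (?cy p)) (A \<times> B)
      (\<lambda>p. (\<lambda>(a,b). g1 a * g2 b) p + (\<lambda>(a,b). g3 a * g4 b) p)"
    by (rule gf_cong) (use hc in auto)
  also have "\<dots> = gf (\<lambda>p. Suc (?cx p)) (\<lambda>p. Suc (?cy p)) (A \<times> B) (\<lambda>(a,b). g1 a * g2 b)
      + gf (\<lambda>p. Suc (?cx p)) (\<lambda>p. Suc (?cy p)) (A \<times> B) (\<lambda>(a,b). g3 a * g4 b)"
    by (rule gf_add)
  also have "\<dots> = fpsx * (fpsy * gf ?cx ?cy (A \<times> B) (\<lambda>(a,b). g1 a * g2 b))
      + fpsx * (fpsy * gf ?cx ?cy (A \<times> B) (\<lambda>(a,b). g3 a * g4 b))"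
    by (simp only: gf_shiftx gf_shifty)
  also have "\<dots> = fpsx * fpsy * (gf cxw cyw A g1 * gf cxw cyw B g2 + gf cxw cyw A g3 * gf cxw cyw B g4)"
    by (simp only: gf_mult[OF finfib_words finfib_words] algebra_simps)
  finally show ?thesis .
qed

lemma bij_hu: "bij_betw hu (Motz \<times> X) (hu ` (Motz \<times> X))"
  by (rule inj_on_imp_bij_betw[OF inj_hu])
lemma bij_hv: "bij_betw hv (Motz \<times> X) (hv ` (Motz \<times> X))"
  by (rule inj_on_imp_bij_betw[OF inj_hv])

lemma hu_counts: "cxw (hu (a,b)) = Suc (cxw a + cxw b)" "cyw (hu (a,b)) = Suc (cyw a + cyw b)"
  by (simp_all add: hu_def)

lemma hv_counts: "a \<in> Motz \<Longrightarrow> cxw (hv (a,b)) = Suc (cxw a + cxw b)"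
  "a \<in> Motz \<Longrightarrow> cyw (hv (a,b)) = Suc (cyw a + cyw b)"
  by (simp_all add: hv_def Motz_def cxw_sw cyw_sw)

lemma cst_hu: "a \<in> Motz \<Longrightarrow> cst 0 (hu (a,b)) = int (length a) + cst 0 a + 1 + cst 0 b"
  using cst_shift[of 0 a 1] by (simp add: hu_def Motz_def)

lemma cst_hv: "a \<in> Motz \<Longrightarrow> cst 0 (hv (a,b)) = int (length a) + cst 0 a + 1 + cst 0 b"
  using cst_shift[of 0 a 1] by (simp add: hv_def Motz_def cst_sw)

definition "EE = gf cxw cyw Motz (\<lambda>_. 1)"
definition "LL = gf cxw cyw Motz (\<lambda>w. real (length w))"
definition "AA = gf cxw cyw Motz (\<lambda>w. real_of_int (cst 0 w))"
definition "GG = gf cxw cyw Br (\<lambda>_. 1)"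
definition "TT = gf cxw cyw Br (\<lambda>w. real_of_int (cst 0 w))"

lemma gf_Motz: "gf cxw cyw Motz f = gf cxw cyw {[]} f + gf cxw cyw ((#) la ` Motz) f
   + gf cxw cyw ((#) lb ` Motz) f + gf cxw cyw (hu ` (Motz \<times> Motz)) f"
proof -
  have "gf cxw cyw Motz f = gf cxw cyw ({[]} \<union> ((#) la ` Motz) \<union> ((#) lb ` Motz) \<union> (hu ` (Motz \<times> Motz))) f"
    using Motz_decomp by simp
  also have "\<dots> = gf cxw cyw {[]} f + gf cxw cyw ((#) la ` Motz) f
   + gf cxw cyw ((#) lb ` Motz) f + gf cxw cyw (hu ` (Motz \<times> Motz)) f"
    by (subst gf_union, (rule finfib_words)+, (auto simp: hu_def)[1])+ (rule refl)
  finally show ?thesis .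
qed

lemma gf_Br: "gf cxw cyw Br f = gf cxw cyw {[]} f + gf cxw cyw ((#) la ` Br) f
   + gf cxw cyw ((#) lb ` Br) f + gf cxw cyw (hu ` (Motz \<times> Br)) f + gf cxw cyw (hv ` (Motz \<times> Br)) f"
proof -
  have "gf cxw cyw Br f = gf cxw cyw ({[]} \<union> ((#) la ` Br) \<union> ((#) lb ` Br) \<union> (hu ` (Motz \<times> Br)) \<union> (hv ` (Motz \<times> Br))) f"
    using Br_decomp by simp
  also have "\<dots> = gf cxw cyw {[]} f + gf cxw cyw ((#) la ` Br) f
   + gf cxw cyw ((#) lb ` Br) f + gf cxw cyw (hu ` (Motz \<times> Br)) f + gf cxw cyw (hv ` (Motz \<times> Br)) f"
    by (subst gf_union, (rule finfib_words)+, (auto simp: hu_def hv_def)[1])+ (rule refl)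
  finally show ?thesis .
qed

lemma gf_zero: "gf cx cy S (\<lambda>_. 0) = 0"
  by (rule fps_ext, rule fps_ext) (simp add: gf_nth)

lemma eqE: "EE = 1 + (fpsx + fpsy) * EE + fpsx*fpsy*(EE*EE)"
proof -
  have "gf cxw cyw (hu ` (Motz \<times> Motz)) (\<lambda>_. 1) =
      fpsx * fpsy * (gf cxw cyw Motz (\<lambda>_. 1) * gf cxw cyw Motz (\<lambda>_. 1) +
        gf cxw cyw Motz (\<lambda>_. 0) * gf cxw cyw Motz (\<lambda>_. 0))"
    by (rule gf_pair[OF bij_hu]) (simp add: hu_counts)
  then show ?thesis
    unfolding EE_def
    by (subst gf_Motz) (simp add: gf_single gf_cons_x gf_cons_y gf_zero algebra_simps)
qed

lemma eqL: "LL = (fpsx + fpsy)*(EE+LL) + fpsx*fpsy*((LL + 2*EE)*EE + EE*LL)"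
proof -
  have "gf cxw cyw (hu ` (Motz \<times> Motz)) (\<lambda>w. real (length w)) =
      fpsx * fpsy * (gf cxw cyw Motz (\<lambda>w. real (length w) + 2) * gf cxw cyw Motz (\<lambda>_. 1) +
        gf cxw cyw Motz (\<lambda>_. 1) * gf cxw cyw Motz (\<lambda>w. real (length w)))"
    by (rule gf_pair[OF bij_hu]) (simp add: hu_counts hu_def)
  moreover have "gf cxw cyw Motz (\<lambda>w. real (length w) + 2) = LL + 2 * EE"
  proof -
    have "gf cxw cyw Motz (\<lambda>w. 2) = gf cxw cyw Motz (\<lambda>w. 1 + 1)" by simp
    also have "\<dots> = 2 * EE" by (simp only: gf_add EE_def mult_2)
    finally have "gf cxw cyw Motz (\<lambda>w. 2) = 2 * EE" .
    then show ?thesis by (simp add: gf_add LL_def)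
  qed
  moreover have "gf cxw cyw Motz (\<lambda>w. 1 + real (length w)) = EE + LL"
    by (simp add: gf_add LL_def EE_def)
  ultimately show ?thesis
    unfolding LL_def[symmetric] EE_def[symmetric]
    by (subst LL_def, subst gf_Motz) (simp add: gf_single0 gf_cons_x gf_cons_y algebra_simps EE_def LL_def)
qed

lemma gf_LAE: "gf cxw cyw Motz (\<lambda>w. real (length w) + real_of_int (cst 0 w) + 1) = LL + AA + EE"
  by (simp add: gf_add LL_def AA_def EE_def)

lemma eqA: "AA = (fpsx+fpsy)*AA + fpsx*fpsy*((LL+AA+EE)*EE + EE*AA)"
proof -
  have "gf cxw cyw (hu ` (Motz \<times> Motz)) (\<lambda>w. real_of_int (cst 0 w)) =
      fpsx * fpsy * (gf cxw cyw Motz (\<lambda>w. real (length w) + real_of_int (cst 0 w) + 1) * gf cxw cyw Motz (\<lambda>_. 1) +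
        gf cxw cyw Motz (\<lambda>_. 1) * gf cxw cyw Motz (\<lambda>w. real_of_int (cst 0 w)))"
    by (rule gf_pair[OF bij_hu]) (simp add: hu_counts cst_hu)
  then show ?thesis
    unfolding gf_LAE
    by (subst AA_def, subst gf_Motz) (simp add: gf_single0 gf_cons_x gf_cons_y algebra_simps EE_def AA_def)
qed

lemma eqG: "GG = 1 + (fpsx+fpsy)*GG + fpsx*fpsy*(EE*GG) + fpsx*fpsy*(EE*GG)"
proof -
  have "gf cxw cyw (hu ` (Motz \<times> Br)) (\<lambda>_. 1) =
      fpsx * fpsy * (gf cxw cyw Motz (\<lambda>_. 1) * gf cxw cyw Br (\<lambda>_. 1) +
        gf cxw cyw Motz (\<lambda>_. 0) * gf cxw cyw Br (\<lambda>_. 0))"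
    by (rule gf_pair[OF bij_hu]) (simp add: hu_counts)
  moreover have "gf cxw cyw (hv ` (Motz \<times> Br)) (\<lambda>_. 1) =
      fpsx * fpsy * (gf cxw cyw Motz (\<lambda>_. 1) * gf cxw cyw Br (\<lambda>_. 1) +
        gf cxw cyw Motz (\<lambda>_. 0) * gf cxw cyw Br (\<lambda>_. 0))"
    by (rule gf_pair[OF bij_hv]) (simp add: hv_counts)
  ultimately show ?thesis
    unfolding GG_def
    by (subst gf_Br) (simp add: gf_single gf_cons_x gf_cons_y gf_zero algebra_simps EE_def)
qed

lemma eqT: "TT = (fpsx+fpsy)*TT + fpsx*fpsy*((LL+AA+EE)*GG + EE*TT) + fpsx*fpsy*((LL+AA+EE)*GG + EE*TT)"
proof -
  have "gf cxw cyw (hu ` (Motz \<times> Br)) (\<lambda>w. real_of_int (cst 0 w)) =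
      fpsx * fpsy * (gf cxw cyw Motz (\<lambda>w. real (length w) + real_of_int (cst 0 w) + 1) * gf cxw cyw Br (\<lambda>_. 1) +
        gf cxw cyw Motz (\<lambda>_. 1) * gf cxw cyw Br (\<lambda>w. real_of_int (cst 0 w)))"
    by (rule gf_pair[OF bij_hu]) (simp add: hu_counts cst_hu)
  moreover have "gf cxw cyw (hv ` (Motz \<times> Br)) (\<lambda>w. real_of_int (cst 0 w)) =
      fpsx * fpsy * (gf cxw cyw Motz (\<lambda>w. real (length w) + real_of_int (cst 0 w) + 1) * gf cxw cyw Br (\<lambda>_. 1) +
        gf cxw cyw Motz (\<lambda>_. 1) * gf cxw cyw Br (\<lambda>w. real_of_int (cst 0 w)))"
    by (rule gf_pair[OF bij_hv]) (simp add: hv_counts cst_hv)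
  ultimately show ?thesis
    unfolding gf_LAE
    by (subst TT_def, subst gf_Br) (simp add: gf_single0 gf_cons_x gf_cons_y algebra_simps EE_def GG_def TT_def)
qed

lemma TT_eq: "TT * (fpsx^2 - 2*fpsx*fpsy + fpsy^2 - 2*fpsx - 2*fpsy + 1)^2 = 2*fpsx*fpsy"
  by (rule key_alg[OF eqE eqG eqL eqA eqT])


lemma inv_right:
  fixes Q :: "real fps fps"
  assumes "Q $ 0 $ 0 \<noteq> 0"
  shows "Q * inverse Q = 1"
proof -
  have "Q $ 0 * inverse (Q $ 0) = 1" using assms by (rule inverse_mult_eq_1')
  then have "Q * fps_right_inverse Q (inverse (Q $ 0)) = 1" by (rule fps_right_inverse)
  then show ?thesis by (simp add: fps_inverse_def)
qed

lemma D0: "(fpsx^2 - 2*fpsx*fpsy + fpsy^2 - 2*fpsx - 2*fpsy + 1 :: real fps fps)^2 $ 0 $ 0 = 1"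
  by (simp add: power2_eq_square fps_mult_nth numeral_fps_const)

lemma final_from_TT:
  assumes "wiener_gf = TT"
  shows "wiener_gf =
    2 * fpsx * fpsy *
      inverse ((fpsx ^ 2 - 2 * fpsx * fpsy + fpsy ^ 2 - 2 * fpsx - 2 * fpsy + 1) ^ 2)"
proof -
  let ?Q = "(fpsx ^ 2 - 2 * fpsx * fpsy + fpsy ^ 2 - 2 * fpsx - 2 * fpsy + 1 :: real fps fps) ^ 2"
  have "?Q * inverse ?Q = 1" by (rule inv_right, subst D0) simp
  then have "TT = TT * ?Q * inverse ?Q" by (simp add: mult.assoc)
  also have "\<dots> = 2 * fpsx * fpsy * inverse ?Q" using TT_eq by simp
  finally show ?thesis using assms by simp
qed


abbreviation "VV m k \<equiv> order_ideals (grid m k) grid_le"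

lemma finite_grid: "finite (grid m k)" by (simp add: grid_def)

lemma VV_sub: "I \<in> VV m k \<Longrightarrow> I \<subseteq> grid m k"
  by (simp add: order_ideals_def)

lemma VV_fin: "I \<in> VV m k \<Longrightarrow> finite I"
  by (rule finite_subset[OF VV_sub finite_grid])

lemma VV_down: "I \<in> VV m k \<Longrightarrow> x \<in> I \<Longrightarrow> y \<in> grid m k \<Longrightarrow> grid_le y x \<Longrightarrow> y \<in> I"
  by (simp add: order_ideals_def)

definition gsz :: "nat \<times> nat \<Rightarrow> nat" where "gsz p = fst p + snd p"

lemma grid_le_less: "grid_le y x \<Longrightarrow> y \<noteq> x \<Longrightarrow> gsz y < gsz x"
  by (cases x, cases y) (auto simp: grid_le_def gsz_def)

lemma ex_min_gsz:
  assumes "finite X" "X \<noteq> {}"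
  shows "\<exists>x\<in>X. \<forall>y\<in>X. gsz x \<le> gsz y"
proof -
  let ?c = "Min (gsz ` X)"
  have "?c \<in> gsz ` X" using assms by simp
  then obtain x where "x \<in> X" "gsz x = ?c" by auto
  moreover have "\<forall>y\<in>X. ?c \<le> gsz y" using assms by simp
  ultimately show ?thesis by (intro bexI[of _ x]) simp_all
qed

lemma ex_max_gsz:
  assumes "finite X" "X \<noteq> {}"
  shows "\<exists>x\<in>X. \<forall>y\<in>X. gsz y \<le> gsz x"
proof -
  let ?c = "Max (gsz ` X)"
  have "?c \<in> gsz ` X" using assms by simp
  then obtain x where "x \<in> X" "gsz x = ?c" by auto
  moreover have "\<forall>y\<in>X. gsz y \<le> ?c" using assms by simp
  ultimately show ?thesis by (intro bexI[of _ x]) simp_all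
qed

lemma add_min:
  assumes I: "I \<in> VV m k" and J: "J \<in> VV m k" and x: "x \<in> J - I"
    and mn: "\<forall>y\<in>J - I. gsz x \<le> gsz y"
  shows "insert x I \<in> VV m k"
proof -
  have "x \<in> grid m k" using x J VV_sub by blast
  moreover have "y \<in> insert x I" if "z \<in> insert x I" "y \<in> grid m k" "grid_le y z" for y z
  proof (cases "z = x")
    case True
    show ?thesis
    proof (rule ccontr)
      assume "y \<notin> insert x I"
      moreover have "y \<in> J" using VV_down[OF J, of x y] x that True by auto
      ultimately have "y \<in> J - I" "y \<noteq> x" by auto
      then have "gsz x \<le> gsz y" using mn by blast
      moreover have "gsz y < gsz x" using grid_le_less[of y x] that True \<open>y \<noteq> x\<close> by auto
      ultimately show False by simp
    qed
  next
    case False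
    then show ?thesis using VV_down[OF I, of z y] that by auto
  qed
  ultimately show ?thesis using I by (auto simp: order_ideals_def)
qed

lemma del_max:
  assumes I: "I \<in> VV m k" and J: "J \<in> VV m k" and x: "x \<in> I - J"
    and mx: "\<forall>y\<in>I - J. gsz y \<le> gsz x"
  shows "I - {x} \<in> VV m k"
proof -
  have "y \<in> I - {x}" if "z \<in> I - {x}" "y \<in> grid m k" "grid_le y z" for y z
  proof -
    have yI: "y \<in> I" using VV_down[OF I, of z y] that by auto
    show ?thesis
    proof (rule ccontr)
      assume "y \<notin> I - {x}"
      with yI have yx: "y = x" by auto
      have "z \<notin> J" using VV_down[OF J, of z y] that x yx by auto
      then have "z \<in> I - J" using that by auto
      with mx have "gsz z \<le> gsz x" by auto
      moreover have "gsz x < gsz z" using grid_le_less[of x z] that yx by auto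
      ultimately show False by simp
    qed
  qed
  then have "\<forall>z\<in>I - {x}. \<forall>y\<in>grid m k. grid_le y z \<longrightarrow> y \<in> I - {x}" by blast
  moreover have "I - {x} \<subseteq> grid m k" using VV_sub[OF I] by blast
  ultimately show ?thesis unfolding order_ideals_def by blast
qed

lemma adj_of_card1:
  assumes "I \<in> VV m k" "J \<in> VV m k" "I \<subseteq> J" "card (J - I) = 1"
  shows "hasse_adj (VV m k) (\<subseteq>) I J"
proof -
  obtain x where x: "J - I = {x}" using assms(4) card_1_singletonE by blast
  have "covers (VV m k) (\<subseteq>) I J"
    unfolding covers_def
  proof (intro conjI)
    show "I \<noteq> J" using x by auto
    show "\<not> (\<exists>c\<in>VV m k. I \<subseteq> c \<and> c \<subseteq> J \<and> c \<noteq> I \<and> c \<noteq> J)"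
    proof
      assume "\<exists>c\<in>VV m k. I \<subseteq> c \<and> c \<subseteq> J \<and> c \<noteq> I \<and> c \<noteq> J"
      then obtain c where "I \<subseteq> c" "c \<subseteq> J" "c \<noteq> I" "c \<noteq> J" by blast
      moreover have JJ: "J = insert x I" using x assms(3) by blast
      ultimately show False by (cases "x \<in> c") blast+
    qed
  qed (use assms in auto)
  then show ?thesis by (simp add: hasse_adj_def)
qed

lemma card1_of_covers:
  assumes c: "covers (VV m k) (\<subseteq>) I J"
  shows "card (I - J) + card (J - I) = 1"
proof -
  have I: "I \<in> VV m k" and J: "J \<in> VV m k" and sub: "I \<subseteq> J" and ne: "I \<noteq> J"
    and nb: "\<not> (\<exists>c\<in>VV m k. I \<subseteq> c \<and> c \<subseteq> J \<and> c \<noteq> I \<and> c \<noteq> J)"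
    using c by (auto simp: covers_def)
  have fin: "finite (J - I)" using VV_fin[OF J] by simp
  have nemp: "J - I \<noteq> {}" using sub ne by auto
  obtain x where x: "x \<in> J - I" and mn: "\<forall>y\<in>J - I. gsz x \<le> gsz y"
    using ex_min_gsz[OF fin nemp] by blast
  have xI: "insert x I \<in> VV m k" by (rule add_min[OF I J x mn])
  have "insert x I = J"
  proof (rule ccontr)
    assume "insert x I \<noteq> J"
    moreover have "I \<subseteq> insert x I" "insert x I \<subseteq> J" "insert x I \<noteq> I" using x sub by auto
    ultimately show False using nb xI by blast
  qed
  then have "J - I = {x}" using x by auto
  moreover have "card (I - J) = 0" by (metis sub Diff_eq_empty_iff card.empty)
  ultimately show ?thesis by simp
qed

lemma symdiff_card_adj:
  assumes "hasse_adj (VV m k) (\<subseteq>) I J"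
  shows "card (I - J) + card (J - I) = 1"
  using assms card1_of_covers[of m k I J] card1_of_covers[of m k J I]
  by (auto simp: hasse_adj_def)

lemma adj_sym: "hasse_adj P le I J \<Longrightarrow> hasse_adj P le J I"
  by (auto simp: hasse_adj_def)

definition sd :: "'a set \<Rightarrow> 'a set \<Rightarrow> nat" where "sd I J = card (I - J) + card (J - I)"

lemma sd_tri:
  assumes "finite I" "finite J" "finite K"
  shows "sd I K \<le> sd I J + sd J K"
proof -
  have "card (I - K) \<le> card (I - J) + card (J - K)"
  proof -
    have "I - K \<subseteq> (I - J) \<union> (J - K)" by auto
    then have "card (I - K) \<le> card ((I - J) \<union> (J - K))"
      by (rule card_mono[rotated]) (use assms in auto)
    also have "\<dots> \<le> card (I - J) + card (J - K)" by (rule card_Un_le)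
    finally show ?thesis .
  qed
  moreover have "card (K - I) \<le> card (K - J) + card (J - I)"
  proof -
    have "K - I \<subseteq> (K - J) \<union> (J - I)" by auto
    then have "card (K - I) \<le> card ((K - J) \<union> (J - I))"
      by (rule card_mono[rotated]) (use assms in auto)
    also have "\<dots> \<le> card (K - J) + card (J - I)" by (rule card_Un_le)
    finally show ?thesis .
  qed
  ultimately show ?thesis by (simp add: sd_def)
qed

lemma sd_zero: "finite I \<Longrightarrow> finite J \<Longrightarrow> sd I J = 0 \<Longrightarrow> I = J"
  by (auto simp: sd_def)

lemma walk_lower:
  assumes "is_walk (VV m k) (hasse_adj (VV m k) (\<subseteq>)) xs p q"
  shows "sd p q \<le> length xs - 1"
  using assms
proof (induction xs arbitrary: p)
  case Nil then show ?case by (simp add: is_walk_def)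
next
  case (Cons a xs)
  show ?case
  proof (cases xs)
    case Nil
    then show ?thesis using Cons.prems by (auto simp: is_walk_def sd_def)
  next
    case (Cons b ys)
    have pa: "p = a" and ia: "a \<in> VV m k" and ib: "b \<in> VV m k"
      using Cons.prems \<open>xs = b # ys\<close> by (auto simp: is_walk_def)
    have adj: "hasse_adj (VV m k) (\<subseteq>) a b"
      using Cons.prems \<open>xs = b # ys\<close> unfolding is_walk_def by (metis length_Cons nth_Cons_0 nth_Cons_Suc zero_less_Suc Suc_less_eq)
    have "is_walk (VV m k) (hasse_adj (VV m k) (\<subseteq>)) xs b q"
      using Cons.prems \<open>xs = b # ys\<close> unfolding is_walk_def
      by (auto simp del: nth_Cons_Suc)
    from Cons.IH[OF this] have "sd b q \<le> length xs - 1" .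
    moreover have "sd a b = 1" using symdiff_card_adj[OF adj] by (simp add: sd_def)
    moreover have "finite q"
    proof -
      have "q \<in> set (a # xs)" using Cons.prems last_in_set[of "a # xs"] unfolding is_walk_def by auto
      then have "q \<in> VV m k" using Cons.prems unfolding is_walk_def by blast
      then show ?thesis by (rule VV_fin)
    qed
    ultimately show ?thesis using sd_tri[of a b q] VV_fin[OF ia] VV_fin[OF ib] pa \<open>xs = b # ys\<close>
      by auto
  qed
qed

lemma step_exists:
  assumes I: "I \<in> VV m k" and J: "J \<in> VV m k" and ne: "I \<noteq> J"
  shows "\<exists>K\<in>VV m k. hasse_adj (VV m k) (\<subseteq>) I K \<and> Suc (sd K J) = sd I J"
proof (cases "J - I = {}")
  case False
  have fin: "finite (J - I)" using VV_fin[OF J] by simp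
  obtain x where x: "x \<in> J - I" and mn: "\<forall>y\<in>J - I. gsz x \<le> gsz y"
    using ex_min_gsz[OF fin False] by blast
  let ?K = "insert x I"
  have K: "?K \<in> VV m k" by (rule add_min[OF I J x mn])
  have "?K - I = {x}" using x by auto
  then have adj: "hasse_adj (VV m k) (\<subseteq>) I ?K" by (intro adj_of_card1[OF I K]) auto
  have "?K - J = I - J" using x by auto
  moreover have "J - ?K = (J - I) - {x}" by auto
  moreover have "card ((J - I) - {x}) + 1 = card (J - I)" using x fin
    by (metis card_Diff1_less card_Suc_Diff1 Suc_eq_plus1)
  ultimately have "Suc (sd ?K J) = sd I J" by (simp add: sd_def)
  with K adj show ?thesis by blast
next
  case True
  then have sub: "J \<subseteq> I" by auto
  with ne have nemp: "I - J \<noteq> {}" by auto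
  have fin: "finite (I - J)" using VV_fin[OF I] by simp
  obtain x where x: "x \<in> I - J" and mx: "\<forall>y\<in>I - J. gsz y \<le> gsz x"
    using ex_max_gsz[OF fin nemp] by blast
  let ?K = "I - {x}"
  have K: "?K \<in> VV m k" by (rule del_max[OF I J x mx])
  have "I - ?K = {x}" using x by auto
  then have "hasse_adj (VV m k) (\<subseteq>) ?K I" by (intro adj_of_card1[OF K I]) auto
  then have adj: "hasse_adj (VV m k) (\<subseteq>) I ?K" by (rule adj_sym)
  have "J - ?K = {}" using sub x by auto
  then have "card (J - ?K) = 0" by (metis card.empty)
  moreover have "?K - J = (I - J) - {x}" by auto
  moreover have "card ((I - J) - {x}) + 1 = card (I - J)" using x fin
    by (metis card_Suc_Diff1 Suc_eq_plus1)
  moreover have "card (J - I) = 0" using True by (metis card.empty)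
  ultimately have "Suc (sd ?K J) = sd I J" by (simp add: sd_def)
  with K adj show ?thesis by blast
qed

lemma walk_exists:
  assumes "I \<in> VV m k" "J \<in> VV m k"
  shows "\<exists>xs. is_walk (VV m k) (hasse_adj (VV m k) (\<subseteq>)) xs I J \<and> length xs = Suc (sd I J)"
  using assms
proof (induction "sd I J" arbitrary: I)
  case 0
  then have "I = J" using sd_zero VV_fin by metis
  then show ?case using 0 by (intro exI[of _ "[I]"]) (auto simp: is_walk_def)
next
  case (Suc n)
  then have "I \<noteq> J" by (auto simp: sd_def)
  from step_exists[OF Suc.prems(1,2) this] obtain K where
    K: "K \<in> VV m k" "hasse_adj (VV m k) (\<subseteq>) I K" "Suc (sd K J) = sd I J" by blast
  then have "n = sd K J" using Suc.hyps(2) by simp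
  from Suc.hyps(1)[OF this K(1) Suc.prems(2)] obtain xs where
    xs: "is_walk (VV m k) (hasse_adj (VV m k) (\<subseteq>)) xs K J" "length xs = Suc (sd K J)" by blast
  have "is_walk (VV m k) (hasse_adj (VV m k) (\<subseteq>)) (I # xs) I J"
    unfolding is_walk_def
  proof (intro conjI allI impI)
    show "set (I # xs) \<subseteq> VV m k" using xs(1) Suc.prems(1) by (auto simp: is_walk_def)
    show "last (I # xs) = J" using xs(1) by (auto simp: is_walk_def)
    fix i assume i: "Suc i < length (I # xs)"
    show "hasse_adj (VV m k) (\<subseteq>) ((I # xs) ! i) ((I # xs) ! Suc i)"
    proof (cases i)
      case 0 then show ?thesis using K(2) xs(1) by (cases xs) (auto simp: is_walk_def)
    next
      case (Suc j) then show ?thesis using xs(1) i by (auto simp: is_walk_def)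
    qed
  qed simp_all
  then show ?case using xs(2) K(3) by (intro exI[of _ "I # xs"]) simp
qed

lemma graph_dist_sd:
  assumes "I \<in> VV m k" "J \<in> VV m k"
  shows "graph_dist (VV m k) (hasse_adj (VV m k) (\<subseteq>)) I J = sd I J"
  unfolding graph_dist_def
proof (rule Least_equality)
  show "\<exists>xs. is_walk (VV m k) (hasse_adj (VV m k) (\<subseteq>)) xs I J \<and> length xs = Suc (sd I J)"
    by (rule walk_exists[OF assms])
  fix n assume "\<exists>xs. is_walk (VV m k) (hasse_adj (VV m k) (\<subseteq>)) xs I J \<and> length xs = Suc n"
  then obtain xs where "is_walk (VV m k) (hasse_adj (VV m k) (\<subseteq>)) xs I J" "length xs = Suc n" by blast
  with walk_lower show "sd I J \<le> n" by fastforce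
qed

lemma dP_sd: "dP m k = (\<Sum>(I,J) \<in> VV m k \<times> VV m k. sd I J)"
  unfolding dP_def poset_wiener_def wiener_def
  by (rule sum.cong) (auto simp: graph_dist_sd)


definition cnt :: "bool list \<Rightarrow> nat" where "cnt P = length (filter id P)"
definition pos :: "bool list \<Rightarrow> nat list" where "pos P = filter (\<lambda>r. P ! r) [0..<length P]"
definition WW :: "nat \<Rightarrow> nat \<Rightarrow> bool list set" where
  "WW m k = {P. length P = m + k \<and> cnt P = m}"

lemma pos_sorted: "sorted_wrt (<) (pos P)"
  unfolding pos_def by (rule sorted_wrt_filter) simp

lemma pos_set: "set (pos P) = {r. r < length P \<and> P ! r}"
  by (auto simp: pos_def)

lemma pos_length: "length (pos P) = cnt P"
proof -
  have "length (pos P) = card {i. i < length P \<and> P ! i}"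
    unfolding pos_def by (simp add: length_filter_conv_card cong: conj_cong)
  also have "\<dots> = cnt P"
    unfolding cnt_def by (simp add: length_filter_conv_card)
  finally show ?thesis .
qed

lemma strict_gap:
  assumes "sorted_wrt (<) (p :: nat list)" "i \<le> j" "j < length p"
  shows "p ! i + (j - i) \<le> p ! j"
  using assms(2,3)
proof (induction j)
  case 0 then show ?case by simp
next
  case (Suc j)
  show ?case
  proof (cases "i = Suc j")
    case True then show ?thesis by simp
  next
    case False
    then have "i \<le> j" using Suc.prems by simp
    with Suc.IH have "p ! i + (j - i) \<le> p ! j" using Suc.prems by simp
    moreover have "p ! j < p ! Suc j" using sorted_wrt_nth_less[OF assms(1), of j "Suc j"] Suc.prems by simp
    ultimately show ?thesis using \<open>i \<le> j\<close> by simp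
  qed
qed

lemma pos_bounds:
  assumes "P \<in> WW m k" "j < m"
  shows "j \<le> pos P ! j" "pos P ! j < m + k" "pos P ! j - j \<le> k"
proof -
  have len: "length (pos P) = m" using assms(1) by (simp add: WW_def pos_length)
  have lenP: "length P = m + k" using assms(1) by (simp add: WW_def)
  show "j \<le> pos P ! j" using strict_gap[OF pos_sorted, of 0 j P] len assms(2) by simp
  have inset: "pos P ! i \<in> set (pos P)" if "i < m" for i using that len by simp
  then have lt: "pos P ! i < m + k" if "i < m" for i using that pos_set[of P] lenP by auto
  then show "pos P ! j < m + k" using assms(2) .
  have "pos P ! j + (m - 1 - j) \<le> pos P ! (m - 1)"
    using strict_gap[OF pos_sorted, of j "m - 1" P] len assms(2) by simp
  moreover have "pos P ! (m - 1) < m + k" using lt[of "m - 1"] assms(2) by simp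
  ultimately show "pos P ! j - j \<le> k" by simp
qed

lemma pos_mono_shift:
  assumes "P \<in> WW m k" "j \<le> j'" "j' < m"
  shows "pos P ! j - j \<le> pos P ! j' - j'"
proof -
  have len: "length (pos P) = m" using assms(1) by (simp add: WW_def pos_length)
  have "pos P ! j + (j' - j) \<le> pos P ! j'" using strict_gap[OF pos_sorted, of j j' P] len assms by simp
  then show ?thesis using pos_bounds(1)[OF assms(1), of j] assms by simp
qed

definition lamP :: "nat \<Rightarrow> bool list \<Rightarrow> nat \<Rightarrow> nat" where
  "lamP m P i = pos P ! (m - i) - (m - i)"
definition psi :: "nat \<Rightarrow> bool list \<Rightarrow> (nat \<times> nat) set" where
  "psi m P = (SIGMA i:{1..m}. {1..lamP m P i})"
definition lam :: "(nat \<times> nat) set \<Rightarrow> nat \<Rightarrow> nat" where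
  "lam I i = card {t. (i, t) \<in> I}"

lemma lamP_le: "P \<in> WW m k \<Longrightarrow> i \<in> {1..m} \<Longrightarrow> lamP m P i \<le> k"
  using pos_bounds(3)[of P m k "m - i"] by (auto simp: lamP_def)

lemma lamP_dec: "P \<in> WW m k \<Longrightarrow> 1 \<le> i' \<Longrightarrow> i' \<le> i \<Longrightarrow> i \<le> m \<Longrightarrow> lamP m P i \<le> lamP m P i'"
  using pos_mono_shift[of P m k "m - i" "m - i'"] by (auto simp: lamP_def)

lemma psi_VV: assumes "P \<in> WW m k" shows "psi m P \<in> VV m k"
proof -
  have "psi m P \<subseteq> grid m k"
  proof
    fix x assume "x \<in> psi m P"
    then obtain i t where x: "x = (i,t)" "i \<in> {1..m}" "t \<in> {1..lamP m P i}" unfolding psi_def by blast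
    then have "t \<le> k" using lamP_le[OF assms x(2)] by auto
    then show "x \<in> grid m k" using x by (auto simp: grid_def)
  qed
  moreover have "y \<in> psi m P" if xp: "x \<in> psi m P" and yg: "y \<in> grid m k" and le: "grid_le y x" for x y
  proof -
    obtain i t where x: "x = (i,t)" "i \<in> {1..m}" "t \<in> {1..lamP m P i}" using xp unfolding psi_def by blast
    obtain i' t' where y: "y = (i',t')" "i' \<in> {1..m}" "t' \<in> {1..k}" using yg unfolding grid_def by blast
    have "i' \<le> i" "t' \<le> t" using le x y by (auto simp: grid_le_def)
    then have "t' \<le> lamP m P i'" using lamP_dec[OF assms, of i' i] x y by auto
    then show ?thesis using x y by (auto simp: psi_def)
  qed
  ultimately show ?thesis by (auto simp: order_ideals_def)
qed

lemma lam_psi: "i \<in> {1..m} \<Longrightarrow> lam (psi m P) i = lamP m P i"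
proof -
  assume "i \<in> {1..m}"
  then have "{t. (i, t) \<in> psi m P} = {1..lamP m P i}" by (auto simp: psi_def)
  then show ?thesis by (simp add: lam_def)
qed

lemma down_interval:
  assumes "finite A" "\<And>t. t \<in> A \<Longrightarrow> 1 \<le> t" "\<And>t t'. t \<in> A \<Longrightarrow> 1 \<le> t' \<Longrightarrow> t' \<le> t \<Longrightarrow> t' \<in> A"
  shows "A = {1..card (A :: nat set)}"
proof (cases "A = {}")
  case True then show ?thesis by simp
next
  case False
  have "A = {1..Max A}"
  proof
    show "A \<subseteq> {1..Max A}" using assms(1,2) by auto
    show "{1..Max A} \<subseteq> A" using assms(3) Max_in[OF assms(1) False] by auto
  qed
  then show ?thesis by (metis card_atLeastAtMost diff_Suc_1)
qed

lemma VV_rows: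
  assumes "I \<in> VV m k"
  shows "I = (SIGMA i:{1..m}. {1..lam I i})"
proof -
  have row: "{t. (i,t) \<in> I} = {1..lam I i}" for i
    unfolding lam_def
  proof (rule down_interval)
    have "{t. (i,t) \<in> I} \<subseteq> {1..k}" using VV_sub[OF assms] by (auto simp: grid_def)
    then show "finite {t. (i,t) \<in> I}" by (rule finite_subset) simp
    show "\<And>t. t \<in> {t. (i, t) \<in> I} \<Longrightarrow> 1 \<le> t" using VV_sub[OF assms] by (auto simp: grid_def)
    fix t t' assume "t \<in> {t. (i, t) \<in> I}" "1 \<le> t'" "t' \<le> t"
    moreover then have "(i,t') \<in> grid m k" using VV_sub[OF assms] by (auto simp: grid_def)
    ultimately show "t' \<in> {t. (i, t) \<in> I}"
      using VV_down[OF assms, of "(i,t)" "(i,t')"] by (auto simp: grid_le_def)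
  qed
  show ?thesis
  proof
    show "I \<subseteq> (SIGMA i:{1..m}. {1..lam I i})"
    proof
      fix x assume "x \<in> I"
      then have "x \<in> grid m k" using VV_sub[OF assms] by blast
      then obtain i t where "x = (i,t)" "i \<in> {1..m}" unfolding grid_def by blast
      with row[of i] \<open>x \<in> I\<close> show "x \<in> (SIGMA i:{1..m}. {1..lam I i})" by auto
    qed
    show "(SIGMA i:{1..m}. {1..lam I i}) \<subseteq> I" using row by auto
  qed
qed

lemma lam_dec: "I \<in> VV m k \<Longrightarrow> 1 \<le> i' \<Longrightarrow> i' \<le> i \<Longrightarrow> i \<le> m \<Longrightarrow> lam I i \<le> lam I i'"
proof -
  assume I: "I \<in> VV m k" and h: "1 \<le> i'" "i' \<le> i" "i \<le> m"
  have "{t. (i,t) \<in> I} \<subseteq> {t. (i',t) \<in> I}"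
  proof
    fix t assume "t \<in> {t. (i,t) \<in> I}"
    moreover then have "(i',t) \<in> grid m k" using VV_sub[OF I] h by (auto simp: grid_def)
    ultimately show "t \<in> {t. (i',t) \<in> I}"
      using VV_down[OF I, of "(i,t)" "(i',t)"] h by (auto simp: grid_le_def)
  qed
  moreover have "finite {t. (i',t) \<in> I}"
  proof -
    have "{t. (i',t) \<in> I} \<subseteq> {1..k}" using VV_sub[OF I] by (auto simp: grid_def)
    then show ?thesis by (rule finite_subset) simp
  qed
  ultimately show ?thesis unfolding lam_def by (rule card_mono[rotated])
qed

lemma lam_le: "I \<in> VV m k \<Longrightarrow> lam I i \<le> k"
proof -
  assume I: "I \<in> VV m k"
  have "{t. (i,t) \<in> I} \<subseteq> {1..k}" using VV_sub[OF I] by (auto simp: grid_def)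
  then show ?thesis unfolding lam_def using card_mono[of "{1..k}"] by fastforce
qed

lemma pos_eq_imp_eq:
  assumes "length P = length Q" "pos P = pos Q"
  shows "P = Q"
proof (rule nth_equalityI)
  show "length P = length Q" by (rule assms(1))
  fix r assume r: "r < length P"
  have e1: "P ! r \<longleftrightarrow> r \<in> set (pos P)" using r by (simp add: pos_set)
  have e2: "Q ! r \<longleftrightarrow> r \<in> set (pos Q)" using r assms(1) by (simp add: pos_set)
  show "P ! r = Q ! r" using e1 e2 assms(2) by simp
qed

lemma psi_inj: "inj_on (psi m) (WW m k)"
proof (rule inj_onI)
  fix P Q assume P: "P \<in> WW m k" and Q: "Q \<in> WW m k" and eq: "psi m P = psi m Q"
  have lenP: "length (pos P) = m" and lenQ: "length (pos Q) = m"
    using P Q by (simp_all add: WW_def pos_length)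
  have "pos P = pos Q"
  proof (rule nth_equalityI)
    show "length (pos P) = length (pos Q)" using lenP lenQ by simp
    fix j assume j: "j < length (pos P)"
    then have i: "m - j \<in> {1..m}" using lenP by auto
    have "lamP m P (m - j) = lamP m Q (m - j)"
      using lam_psi[OF i, of P] lam_psi[OF i, of Q] eq by simp
    moreover have "m - (m - j) = j" using j lenP by simp
    ultimately have "pos P ! j - j = pos Q ! j - j" by (simp add: lamP_def)
    moreover have "j \<le> pos P ! j" "j \<le> pos Q ! j"
      using pos_bounds(1)[OF P, of j] pos_bounds(1)[OF Q, of j] j lenP by auto
    ultimately show "pos P ! j = pos Q ! j" by simp
  qed
  moreover have "length P = length Q" using P Q by (simp add: WW_def)
  ultimately show "P = Q" using pos_eq_imp_eq by blast
qed

lemma psi_surj: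
  assumes I: "I \<in> VV m k"
  shows "\<exists>P\<in>WW m k. psi m P = I"
proof -
  define L where "L = map (\<lambda>j. lam I (m - j) + j) [0..<m]"
  define P where "P = map (\<lambda>r. r \<in> set L) [0..<m + k]"
  have Lnth: "L ! j = lam I (m - j) + j" if "j < m" for j using that by (simp add: L_def)
  have lenL: "length L = m" by (simp add: L_def)
  have Lsorted: "sorted_wrt (<) L"
    unfolding sorted_wrt_iff_nth_less lenL
  proof (intro allI impI)
    fix i j assume "i < j" "j < m"
    then have "lam I (m - i) \<le> lam I (m - j)" using lam_dec[OF I, of "m - j" "m - i"] by simp
    then show "L ! i < L ! j" using Lnth[of i] Lnth[of j] \<open>i < j\<close> \<open>j < m\<close> by simp
  qed
  have Lset: "set L \<subseteq> {..<m + k}"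
  proof
    fix x assume "x \<in> set L"
    then obtain j where "j < m" "x = L ! j" using lenL by (auto simp: in_set_conv_nth)
    then show "x \<in> {..<m + k}" using Lnth[of j] lam_le[OF I, of "m - j"] by simp
  qed
  have lenP: "length P = m + k" by (simp add: P_def)
  have "set (pos P) = set L"
    using Lset unfolding pos_set lenP by (auto simp: P_def)
  then have posL: "pos P = L"
    using pos_sorted[of P] Lsorted by (intro sorted_distinct_set_unique) (auto simp: strict_sorted_iff)
  have PW: "P \<in> WW m k" using posL lenL lenP pos_length[of P] by (simp add: WW_def)
  have "lamP m P i = lam I i" if "i \<in> {1..m}" for i
  proof -
    have "m - i < m" "m - (m - i) = i" using that by auto
    then show ?thesis using Lnth[of "m - i"] posL by (simp add: lamP_def)
  qed
  then have "psi m P = (SIGMA i:{1..m}. {1..lam I i})" unfolding psi_def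
    by (intro Sigma_cong refl) simp
  also have "\<dots> = I" using VV_rows[OF I] by simp
  finally show ?thesis using PW by blast
qed

lemma psi_bij: "bij_betw (psi m) (WW m k) (VV m k)"
  unfolding bij_betw_def
proof
  show "inj_on (psi m) (WW m k)" by (rule psi_inj)
  show "psi m ` WW m k = VV m k"
  proof (intro equalityI subsetI)
    fix I assume "I \<in> psi m ` WW m k"
    then obtain P where "P \<in> WW m k" "I = psi m P" by blast
    then show "I \<in> VV m k" using psi_VV by simp
  next
    fix I assume "I \<in> VV m k"
    from psi_surj[OF this] obtain P where "P \<in> WW m k" "psi m P = I" by blast
    then show "I \<in> psi m ` WW m k" by blast
  qed
qed


lemma card_diff_int: "card ({Suc 0..a::nat} - {Suc 0..b}) = a - b"
proof -
  have "{Suc 0..a} - {Suc 0..b} = {Suc b..a}" by auto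
  then show ?thesis by simp
qed

lemma card_ind: "finite A \<Longrightarrow> int (card {x\<in>A. P x}) = (\<Sum>x\<in>A. if P x then 1 else 0)"
proof -
  assume "finite A"
  have "int (card {x\<in>A. P x}) = (\<Sum>x\<in>{x\<in>A. P x}. 1)" by simp
  also have "\<dots> = (\<Sum>x\<in>A. if P x then 1 else 0)" using \<open>finite A\<close> by (rule sum.inter_filter)
  finally show ?thesis .
qed

lemma sd_psi:
  assumes P: "P \<in> WW m k" and Q: "Q \<in> WW m k"
  shows "int (sd (psi m P) (psi m Q)) = (\<Sum>j<m. \<bar>int (pos P ! j) - int (pos Q ! j)\<bar>)"
proof -
  let ?a = "lamP m P" and ?b = "lamP m Q"
  have d1: "psi m P - psi m Q = (SIGMA i:{1..m}. {1..?a i} - {1..?b i})" by (auto simp: psi_def)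
  have d2: "psi m Q - psi m P = (SIGMA i:{1..m}. {1..?b i} - {1..?a i})" by (auto simp: psi_def)
  have "sd (psi m P) (psi m Q) = (\<Sum>i\<in>{1..m}. (?a i - ?b i) + (?b i - ?a i))"
    unfolding sd_def d1 d2 by (simp add: card_SigmaI card_diff_int sum.distrib)
  then have "int (sd (psi m P) (psi m Q)) = (\<Sum>i\<in>{1..m}. \<bar>int (?a i) - int (?b i)\<bar>)"
    by (simp add: of_nat_sum) (intro sum.cong refl, linarith)
  also have "\<dots> = (\<Sum>i\<in>{1..m}. \<bar>int (pos P ! (m - i)) - int (pos Q ! (m - i))\<bar>)"
  proof (rule sum.cong[OF refl])
    fix i assume i: "i \<in> {1..m}"
    then have "m - i < m" by auto
    then have "m - i \<le> pos P ! (m - i)" "m - i \<le> pos Q ! (m - i)"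
      using pos_bounds(1)[OF P] pos_bounds(1)[OF Q] by auto
    then show "\<bar>int (?a i) - int (?b i)\<bar> = \<bar>int (pos P ! (m - i)) - int (pos Q ! (m - i))\<bar>"
      by (simp add: lamP_def of_nat_diff)
  qed
  also have "\<dots> = (\<Sum>j<m. \<bar>int (pos P ! j) - int (pos Q ! j)\<bar>)"
    by (rule sum.reindex_bij_witness[of _ "\<lambda>j. m - j" "\<lambda>i. m - i"]) auto
  finally show ?thesis .
qed

lemma card_cross: "a < n \<Longrightarrow> b < (n::nat) \<Longrightarrow>
  int (card {r. r < n \<and> (a < r) \<noteq> (b < r)}) = \<bar>int a - int b\<bar>"
proof -
  assume "a < n" "b < n"
  then have "{r. r < n \<and> (a < r) \<noteq> (b < r)} = {min a b<..max a b}" by auto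
  then show ?thesis by simp
qed

lemma emd:
  fixes p q :: "nat list"
  assumes "sorted p" "sorted q" "length p = m" "length q = m"
    and "\<forall>j<m. p ! j < n" "\<forall>j<m. q ! j < n"
  shows "(\<Sum>j<m. \<bar>int (p ! j) - int (q ! j)\<bar>) =
    (\<Sum>r<n. \<bar>int (card {j. j < m \<and> p ! j < r}) - int (card {j. j < m \<and> q ! j < r})\<bar>)"
proof -
  let ?A = "\<lambda>r. {j. j < m \<and> p ! j < r}" and ?B = "\<lambda>r. {j. j < m \<and> q ! j < r}"
  have dcA: "j' \<in> ?A r" if "j \<in> ?A r" "j' \<le> j" for j j' r
    using that sorted_nth_mono[OF assms(1), of j' j] assms(3) by auto
  have dcB: "j' \<in> ?B r" if "j \<in> ?B r" "j' \<le> j" for j j' r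
    using that sorted_nth_mono[OF assms(2), of j' j] assms(4) by auto
  have step: "\<bar>int (card (?A r)) - int (card (?B r))\<bar> = int (card {j. j < m \<and> (p ! j < r) \<noteq> (q ! j < r)})" for r
  proof -
    have fA: "finite (?A r)" and fB: "finite (?B r)" by auto
    have "?A r \<subseteq> ?B r \<or> ?B r \<subseteq> ?A r"
    proof (rule ccontr)
      assume "\<not> (?A r \<subseteq> ?B r \<or> ?B r \<subseteq> ?A r)"
      then obtain j j' where j: "j \<in> ?A r" "j \<notin> ?B r" and j': "j' \<in> ?B r" "j' \<notin> ?A r" by blast
      show False
      proof (cases "j \<le> j'")
        case True then show False using dcB[OF j'(1) True] j(2) by blast
      next
        case False then show False using dcA[OF j(1), of j'] j'(2) by simp
      qed
    qed
    moreover have "{j. j < m \<and> (p ! j < r) \<noteq> (q ! j < r)} = (?A r - ?B r) \<union> (?B r - ?A r)" by auto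
    ultimately show ?thesis
    proof (elim disjE)
      assume s: "?A r \<subseteq> ?B r" and e: "{j. j < m \<and> (p ! j < r) \<noteq> (q ! j < r)} = (?A r - ?B r) \<union> (?B r - ?A r)"
      then have "{j. j < m \<and> (p ! j < r) \<noteq> (q ! j < r)} = ?B r - ?A r" by auto
      moreover have "card (?B r - ?A r) = card (?B r) - card (?A r)" using s fA by (simp add: card_Diff_subset)
      moreover have "card (?A r) \<le> card (?B r)" using s fB by (simp add: card_mono)
      ultimately show ?thesis by simp
    next
      assume s: "?B r \<subseteq> ?A r" and e: "{j. j < m \<and> (p ! j < r) \<noteq> (q ! j < r)} = (?A r - ?B r) \<union> (?B r - ?A r)"
      then have "{j. j < m \<and> (p ! j < r) \<noteq> (q ! j < r)} = ?A r - ?B r" by auto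
      moreover have "card (?A r - ?B r) = card (?A r) - card (?B r)" using s fB by (simp add: card_Diff_subset)
      moreover have "card (?B r) \<le> card (?A r)" using s fA by (simp add: card_mono)
      ultimately show ?thesis by simp
    qed
  qed
  have "(\<Sum>r<n. \<bar>int (card (?A r)) - int (card (?B r))\<bar>) =
      (\<Sum>r<n. \<Sum>j<m. if (p ! j < r) \<noteq> (q ! j < r) then 1 else 0)"
  proof (rule sum.cong[OF refl])
    fix r
    have "int (card {j. j < m \<and> (p ! j < r) \<noteq> (q ! j < r)}) = (\<Sum>j<m. if (p ! j < r) \<noteq> (q ! j < r) then 1 else 0)"
    proof -
      have "{j. j < m \<and> (p ! j < r) \<noteq> (q ! j < r)} = {j \<in> {..<m}. (p ! j < r) \<noteq> (q ! j < r)}" by auto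
      then show ?thesis using card_ind[of "{..<m}" "\<lambda>j. (p ! j < r) \<noteq> (q ! j < r)"] by simp
    qed
    then show "\<bar>int (card (?A r)) - int (card (?B r))\<bar> = (\<Sum>j<m. if (p ! j < r) \<noteq> (q ! j < r) then 1 else 0)"
      using step by simp
  qed
  also have "\<dots> = (\<Sum>j<m. \<Sum>r<n. if (p ! j < r) \<noteq> (q ! j < r) then 1 else 0)"
    by (rule sum.swap)
  also have "\<dots> = (\<Sum>j<m. \<bar>int (p ! j) - int (q ! j)\<bar>)"
  proof (rule sum.cong[OF refl])
    fix j assume "j \<in> {..<m}"
    then have "p ! j < n" "q ! j < n" using assms(5,6) by auto
    have "(\<Sum>r<n. if (p ! j < r) \<noteq> (q ! j < r) then 1 else 0) = int (card {r. r < n \<and> (p ! j < r) \<noteq> (q ! j < r)})"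
    proof -
      have "{r. r < n \<and> (p ! j < r) \<noteq> (q ! j < r)} = {r \<in> {..<n}. (p ! j < r) \<noteq> (q ! j < r)}" by auto
      then show ?thesis using card_ind[of "{..<n}" "\<lambda>r. (p ! j < r) \<noteq> (q ! j < r)"] by simp
    qed
    also have "\<dots> = \<bar>int (p ! j) - int (q ! j)\<bar>" by (rule card_cross) fact+
    finally show "(\<Sum>r<n. if (p ! j < r) \<noteq> (q ! j < r) then 1 else 0) = \<bar>int (p ! j) - int (q ! j)\<bar>" .
  qed
  finally show ?thesis by simp
qed


lemma cnt_take_pos:
  assumes P: "P \<in> WW m k"
  shows "card {j. j < m \<and> pos P ! j < r} = cnt (take r P)"
proof -
  have lenpos: "length (pos P) = m" using P by (simp add: WW_def pos_length)
  have "card {j. j < m \<and> pos P ! j < r} = length (filter (\<lambda>x. x < r) (pos P))"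
    using lenpos by (simp add: length_filter_conv_card)
  also have "filter (\<lambda>x. x < r) (pos P) = filter (\<lambda>x. P ! x \<and> x < r) [0..<length P]"
    by (simp add: pos_def conj_commute)
  also have "length \<dots> = card {i. i < length P \<and> P ! i \<and> i < r}"
    by (simp add: length_filter_conv_card cong: conj_cong)
  also have "\<dots> = cnt (take r P)"
  proof -
    have c: "cnt (take r P) = card {i. i < length (take r P) \<and> take r P ! i}"
      unfolding cnt_def length_filter_conv_card by simp
    have "{i. i < length P \<and> P ! i \<and> i < r} = {i. i < length (take r P) \<and> take r P ! i}" by auto
    then show ?thesis using c by simp
  qed
  finally show ?thesis .
qed

lemma cst_sum: "cst h w = (\<Sum>r<length w. \<bar>h + hgt (take r w)\<bar>)"
proof (induction w arbitrary: h)
  case Nil then show ?case by simp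
next
  case (Cons c w)
  have "(\<Sum>r<length (c # w). \<bar>h + hgt (take r (c # w))\<bar>) =
      \<bar>h\<bar> + (\<Sum>r<length w. \<bar>h + hgt (take (Suc r) (c # w))\<bar>)"
    by (simp only: length_Cons sum.lessThan_Suc_shift) simp
  also have "\<dots> = \<bar>h\<bar> + (\<Sum>r<length w. \<bar>h + stp c + hgt (take r w)\<bar>)"
    by (simp add: add.assoc)
  finally show ?case using Cons.IH[of "h + stp c"] by simp
qed

lemma cnt_filter_fst: "length A = length B \<Longrightarrow> length (filter fst (zip A B)) = cnt A"
proof -
  assume "length A = length B"
  then have "length (filter id (map fst (zip A B))) = cnt A" by (simp add: cnt_def)
  then show ?thesis by (simp add: comp_def)
qed

lemma cnt_filter_snd: "length A = length B \<Longrightarrow> length (filter snd (zip A B)) = cnt B"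
proof -
  assume "length A = length B"
  then have "length (filter id (map snd (zip A B))) = cnt B" by (simp add: cnt_def)
  then show ?thesis by (simp add: comp_def)
qed

lemma hgt_zip: "length A = length B \<Longrightarrow> hgt (zip A B) = int (cnt A) - int (cnt B)"
proof -
  assume l: "length A = length B"
  have "length (filter fst (zip A B)) = cnt A" "length (filter snd (zip A B)) = cnt B"
    using cnt_filter_fst[OF l] cnt_filter_snd[OF l] by auto
  then show ?thesis using cnt_hgt[of "zip A B"] by simp
qed

lemma cst_zip:
  assumes "length P = n" "length Q = n"
  shows "cst 0 (zip P Q) = (\<Sum>r<n. \<bar>int (cnt (take r P)) - int (cnt (take r Q))\<bar>)"
  using assms by (simp add: cst_sum take_zip hgt_zip)

definition fib :: "nat \<Rightarrow> nat \<Rightarrow> lt list set" where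
  "fib m k = {w \<in> Br. cxw w = m \<and> cyw w = k}"

lemma zip_bij: "bij_betw (\<lambda>(P,Q). zip P Q) (WW m k \<times> WW m k) (fib m k)"
proof -
  have into: "zip P Q \<in> fib m k" if "P \<in> WW m k" "Q \<in> WW m k" for P Q
  proof -
    have l: "length P = length Q" "length P = m + k" using that by (auto simp: WW_def)
    have "hgt (zip P Q) = 0" using hgt_zip[OF l(1)] that by (simp add: WW_def)
    moreover have cx: "cxw (zip P Q) = m" using cnt_filter_fst[OF l(1)] that by (simp add: cxw_def WW_def)
    moreover have "cyw (zip P Q) = k" using len_cxw_cyw[of "zip P Q"] cx l by simp
    ultimately show ?thesis by (simp add: fib_def Br_def)
  qed
  show ?thesis
  proof (rule bij_betw_byWitness[where f' = "\<lambda>w. (map fst w, map snd w)"])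
    show "\<forall>a\<in>WW m k \<times> WW m k. (map fst ((\<lambda>(P,Q). zip P Q) a), map snd ((\<lambda>(P,Q). zip P Q) a)) = a"
      by (auto simp: WW_def)
    show "\<forall>w\<in>fib m k. (\<lambda>(P,Q). zip P Q) (map fst w, map snd w) = w" by (simp add: zip_map_fst_snd)
    show "(\<lambda>(P,Q). zip P Q) ` (WW m k \<times> WW m k) \<subseteq> fib m k" using into by auto
    show "(\<lambda>w. (map fst w, map snd w)) ` fib m k \<subseteq> WW m k \<times> WW m k"
    proof
      fix x assume "x \<in> (\<lambda>w. (map fst w, map snd w)) ` fib m k"
      then obtain w where w: "w \<in> fib m k" "x = (map fst w, map snd w)" by blast
      have len: "length w = m + k" using w(1) len_cxw_cyw[of w] by (simp add: fib_def)
      have c1: "cnt (map fst w) = m" using w(1) by (simp add: fib_def cxw_def cnt_def comp_def)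
      have "hgt w = 0" using w(1) by (simp add: fib_def Br_def)
      then have "length (filter snd w) = length (filter fst w)" using cnt_hgt[of w] by simp
      then have c2: "cnt (map snd w) = m" using w(1) by (simp add: fib_def cxw_def cnt_def comp_def)
      show "x \<in> WW m k \<times> WW m k" using w(2) len c1 c2 by (simp add: WW_def)
    qed
  qed
qed

lemma dP_cst: "int (dP m k) = (\<Sum>w\<in>fib m k. cst 0 w)"
proof -
  have "int (dP m k) = (\<Sum>I\<in>VV m k. \<Sum>J\<in>VV m k. int (sd I J))"
    unfolding dP_sd by (simp add: of_nat_sum sum.cartesian_product case_prod_beta')
  also have "\<dots> = (\<Sum>P\<in>WW m k. \<Sum>Q\<in>WW m k. int (sd (psi m P) (psi m Q)))"
    by (simp only: sum.reindex_bij_betw[OF psi_bij, symmetric])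
  also have "\<dots> = (\<Sum>P\<in>WW m k. \<Sum>Q\<in>WW m k. cst 0 (zip P Q))"
  proof (rule sum.cong[OF refl], rule sum.cong[OF refl])
    fix P Q assume P: "P \<in> WW m k" and Q: "Q \<in> WW m k"
    have lp: "length (pos P) = m" "length (pos Q) = m" using P Q by (simp_all add: WW_def pos_length)
    have "int (sd (psi m P) (psi m Q)) = (\<Sum>j<m. \<bar>int (pos P ! j) - int (pos Q ! j)\<bar>)"
      by (rule sd_psi[OF P Q])
    also have "\<dots> = (\<Sum>r<m+k. \<bar>int (card {j. j < m \<and> pos P ! j < r}) - int (card {j. j < m \<and> pos Q ! j < r})\<bar>)"
      by (rule emd) (use pos_sorted[of P] pos_sorted[of Q] lp pos_bounds(2)[OF P] pos_bounds(2)[OF Q] in \<open>auto simp: strict_sorted_iff\<close>)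
    also have "\<dots> = (\<Sum>r<m+k. \<bar>int (cnt (take r P)) - int (cnt (take r Q))\<bar>)"
      by (simp add: cnt_take_pos[OF P] cnt_take_pos[OF Q])
    also have "\<dots> = cst 0 (zip P Q)"
      by (rule cst_zip[symmetric]) (use P Q in \<open>auto simp: WW_def\<close>)
    finally show "int (sd (psi m P) (psi m Q)) = cst 0 (zip P Q)" .
  qed
  also have "\<dots> = (\<Sum>x\<in>WW m k \<times> WW m k. cst 0 ((\<lambda>(P,Q). zip P Q) x))"
    by (simp add: sum.cartesian_product case_prod_beta')
  also have "\<dots> = (\<Sum>w\<in>fib m k. cst 0 w)"
    by (rule sum.reindex_bij_betw[OF zip_bij])
  finally show ?thesis .
qed

lemma wiener_TT: "wiener_gf = TT"
proof (rule fps_ext, rule fps_ext)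
  fix k m
  have "TT $ k $ m = (\<Sum>w\<in>fib m k. real_of_int (cst 0 w))"
    by (simp add: TT_def gf_nth fib_def)
  also have "\<dots> = real_of_int (int (dP m k))" by (simp add: dP_cst of_int_sum)
  finally show "wiener_gf $ k $ m = TT $ k $ m" by (simp add: wiener_gf_def)
qed

theorem theorem1p1:
  shows "wiener_gf =
    2 * fpsx * fpsy *
      inverse ((fpsx ^ 2 - 2 * fpsx * fpsy + fpsy ^ 2 - 2 * fpsx - 2 * fpsy + 1) ^ 2)"
  by (rule final_from_TT[OF wiener_TT])


end
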